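(* Let $\beta\ge0$ and let $M_n=\sum_{i=1}^n\sigma(i)$ be the magnetization under the Ising measure $\mathbb{I}_{0,\beta}$ (zero external field). Then $M_n/n^{1/4}$ converges in the complex mod-Gaussian sense with parameters $t_n=n^{1/2}e^{2\beta}$ and limiting function $\psi(z)=\exp\!\big(-\tfrac{3e^{6\beta}-e^{2\beta}}{24}z^4\big)$, i.e. $$\mathbb{E}_{0,\beta}\!\left[e^{zM_n/n^{1/4}}\right]e^{-n^{1/2}e^{2\beta}z^2/2}\longrightarrow \exp\!\Big(-\tfrac{3e^{6\beta}-e^{2\beta}}{24}z^4\Big)$$ locally uniformly for $z$ in compact subsets of $\mathbb{C}$.
   Context: The Ising measure $\mathbb{I}_{\alpha,\beta}$ on spin configurations $\sigma:\{1,\dots,n\}\to\{\pm1\}$ gives to $\sigma$ probability proportional to $\exp\big(\alpha\sum_{i=1}^n\sigma(i)+\beta\sum_{i=1}^{n-1}\sigma(i)\sigma(i+1)\big)$; here $\alpha=0$. *)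

theory Defs
  imports "HOL-Analysis.Analysis"
begin

text \<open>Spin configurations on {1,...,n}: functions sigma with sigma i in {-1,1} for
  i in {1..n} and the default value (undefined) outside.\<close>
definition spin_configs :: "nat \<Rightarrow> (nat \<Rightarrow> real) set" where
  "spin_configs n = PiE {1..n} (\<lambda>_. {-1, 1})"

definition ising_weight :: "real \<Rightarrow> real \<Rightarrow> nat \<Rightarrow> (nat \<Rightarrow> real) \<Rightarrow> real" where
  "ising_weight \<alpha> \<beta> n \<sigma> =
     exp (\<alpha> * (\<Sum>i=1..n. \<sigma> i) + \<beta> * (\<Sum>i=1..n-1. \<sigma> i * \<sigma> (i+1)))"

definition ising_Z :: "real \<Rightarrow> real \<Rightarrow> nat \<Rightarrow> real" where
  "ising_Z \<alpha> \<beta> n = (\<Sum>\<sigma>\<in>spin_configs n. ising_weight \<alpha> \<beta> n \<sigma>)"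

definition ising_expect :: "real \<Rightarrow> real \<Rightarrow> nat \<Rightarrow> ((nat \<Rightarrow> real) \<Rightarrow> complex) \<Rightarrow> complex" where
  "ising_expect \<alpha> \<beta> n X =
     (\<Sum>\<sigma>\<in>spin_configs n. of_real (ising_weight \<alpha> \<beta> n \<sigma>) * X \<sigma>) / of_real (ising_Z \<alpha> \<beta> n)"

definition magnetization :: "nat \<Rightarrow> (nat \<Rightarrow> real) \<Rightarrow> real" where
  "magnetization n \<sigma> = (\<Sum>i=1..n. \<sigma> i)"

end

theory Submission
  imports Defs
begin


lemma exp_taylor:
  fixes w :: complex
  shows "norm (exp w - (\<Sum>n<k. w^n / of_real (fact n))) \<le> norm w ^ k * exp (norm w)"
proof -
  have e: "exp w = (\<Sum>n<k. inverse(fact n) *\<^sub>R (w ^ n)) + (\<Sum>n. inverse(fact (n + k)) *\<^sub>R (w ^ (n + k)))"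
    by (rule exp_first_terms)
  have s: "(\<Sum>n<k. inverse(fact n) *\<^sub>R (w ^ n)) = (\<Sum>n<k. w^n / of_real (fact n))"
    by (simp add: scaleR_conv_of_real divide_inverse mult.commute)
  have "norm (\<Sum>n. inverse(fact (n + k)) *\<^sub>R (w ^ (n + k))) \<le> (\<Sum>n. norm w ^ k * (norm w ^ n /\<^sub>R fact n))"
  proof (rule norm_suminf_le)
    fix n
    have "norm (inverse(fact (n + k)) *\<^sub>R (w ^ (n + k))) = norm w ^ k * norm w ^ n / fact (n+k)"
      by (simp add: norm_power norm_mult power_add divide_inverse mult_ac)
    also have "\<dots> \<le> norm w ^ k * norm w ^ n / fact n"
      by (intro divide_left_mono) (auto simp: fact_mono)
    finally show "norm (inverse(fact (n + k)) *\<^sub>R (w ^ (n + k))) \<le> norm w ^ k * (norm w ^ n /\<^sub>R fact n)"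
      by (simp add: divide_inverse mult_ac)
  next
    show "summable (\<lambda>n. norm w ^ k * (norm w ^ n /\<^sub>R fact n))"
      by (intro summable_mult summable_exp_generic)
  qed
  also have "\<dots> = norm w ^ k * exp (norm w)"
    using exp_converges[of "norm w"] by (simp add: sums_iff suminf_mult)
  finally show ?thesis using e s by simp
qed



definition bo :: "(complex \<Rightarrow> complex) \<Rightarrow> nat \<Rightarrow> bool" where
  "bo f k \<longleftrightarrow> (\<exists>C \<epsilon>. C \<ge> 0 \<and> \<epsilon> > 0 \<and> (\<forall>h. norm h \<le> \<epsilon> \<longrightarrow> norm (f h) \<le> C * norm h ^ k))"

lemma boI: "C \<ge> 0 \<Longrightarrow> \<epsilon> > 0 \<Longrightarrow> (\<And>h. norm h \<le> \<epsilon> \<Longrightarrow> norm (f h) \<le> C * norm h ^ k) \<Longrightarrow> bo f k"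
  unfolding bo_def by blast

lemma boE:
  assumes "bo f k"
  obtains C \<epsilon> where "C \<ge> 0" "\<epsilon> > 0" "\<And>h. norm h \<le> \<epsilon> \<Longrightarrow> norm (f h) \<le> C * norm h ^ k"
  using assms unfolding bo_def by blast

lemma bo_const: "bo (\<lambda>_. c) 0"
  by (rule boI[of "norm c" 1]) auto

lemma bo_id: "bo (\<lambda>h. h) 1"
  by (rule boI[of 1 1]) auto

lemma bo_eq: "bo f k \<Longrightarrow> (\<And>h. f h = g h) \<Longrightarrow> bo g k"
  unfolding bo_def by simp

lemma bo_add:
  assumes "bo f k" "bo g k" shows "bo (\<lambda>h. f h + g h) k"
proof -
  obtain C1 e1 where 1: "C1 \<ge> 0" "e1 > 0" "\<And>h. norm h \<le> e1 \<Longrightarrow> norm (f h) \<le> C1 * norm h ^ k"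
    using assms(1) unfolding bo_def by blast
  obtain C2 e2 where 2: "C2 \<ge> 0" "e2 > 0" "\<And>h. norm h \<le> e2 \<Longrightarrow> norm (g h) \<le> C2 * norm h ^ k"
    using assms(2) unfolding bo_def by blast
  show ?thesis
  proof (rule boI[of "C1 + C2" "min e1 e2"])
    fix h :: complex assume "norm h \<le> min e1 e2"
    then have "norm (f h) \<le> C1 * norm h ^ k" "norm (g h) \<le> C2 * norm h ^ k" using 1 2 by auto
    then show "norm (f h + g h) \<le> (C1 + C2) * norm h ^ k"
      using norm_triangle_ineq[of "f h" "g h"] by (simp add: algebra_simps)
  qed (use 1 2 in auto)
qed

lemma bo_minus: "bo f k \<Longrightarrow> bo (\<lambda>h. - f h) k"
  unfolding bo_def by simp

lemma bo_diff: "bo f k \<Longrightarrow> bo g k \<Longrightarrow> bo (\<lambda>h. f h - g h) k"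
  using bo_add[of f k "\<lambda>h. - g h"] bo_minus[of g k] by simp

lemma bo_mult:
  assumes "bo f a" "bo g b" shows "bo (\<lambda>h. f h * g h) (a + b)"
proof -
  obtain C1 e1 where 1: "C1 \<ge> 0" "e1 > 0" "\<And>h. norm h \<le> e1 \<Longrightarrow> norm (f h) \<le> C1 * norm h ^ a"
    using assms(1) unfolding bo_def by blast
  obtain C2 e2 where 2: "C2 \<ge> 0" "e2 > 0" "\<And>h. norm h \<le> e2 \<Longrightarrow> norm (g h) \<le> C2 * norm h ^ b"
    using assms(2) unfolding bo_def by blast
  show ?thesis
  proof (rule boI[of "C1 * C2" "min e1 e2"])
    fix h :: complex assume "norm h \<le> min e1 e2"
    then have "norm (f h) \<le> C1 * norm h ^ a" "norm (g h) \<le> C2 * norm h ^ b" using 1 2 by auto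
    then have "norm (f h) * norm (g h) \<le> (C1 * norm h ^ a) * (C2 * norm h ^ b)"
      by (intro mult_mono) (use 1 in auto)
    then show "norm (f h * g h) \<le> (C1 * C2) * norm h ^ (a + b)"
      by (simp add: norm_mult power_add mult_ac)
  qed (use 1 2 in auto)
qed

lemma bo_mono:
  assumes "bo f k" "j \<le> k" shows "bo f j"
proof -
  obtain C e where 1: "C \<ge> 0" "e > 0" "\<And>h. norm h \<le> e \<Longrightarrow> norm (f h) \<le> C * norm h ^ k"
    using assms(1) unfolding bo_def by blast
  show ?thesis
  proof (rule boI[of C "min e 1"])
    fix h :: complex assume h: "norm h \<le> min e 1"
    have "norm h ^ k \<le> norm h ^ j" using h assms(2) by (intro power_decreasing) auto
    then show "norm (f h) \<le> C * norm h ^ j" using 1(3)[of h] h 1(1)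
      by (meson min.boundedE mult_left_mono order_trans)
  qed (use 1 in auto)
qed

lemma bo_pow: "bo f a \<Longrightarrow> bo (\<lambda>h. f h ^ m) (a * m)"
proof (induction m)
  case 0 then show ?case using bo_const[of 1] by simp
next
  case (Suc m)
  then have "bo (\<lambda>h. f h * f h ^ m) (a + a * m)" by (intro bo_mult) auto
  then show ?case by simp
qed

lemma bo_small:
  assumes "bo f k" "k \<ge> 1" "e > 0"
  obtains \<epsilon> where "\<epsilon> > 0" "\<And>h. norm h \<le> \<epsilon> \<Longrightarrow> norm (f h) \<le> e"
proof -
  have "bo f 1" by (rule bo_mono[OF assms(1)]) (use assms in auto)
  then obtain C \<epsilon> where 1: "C \<ge> 0" "\<epsilon> > 0" "\<And>h. norm h \<le> \<epsilon> \<Longrightarrow> norm (f h) \<le> C * norm h ^ 1"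
    unfolding bo_def by blast
  define d where "d = min \<epsilon> (e / (C + 1))"
  have d: "d > 0" using 1 assms by (auto simp: d_def)
  show ?thesis
  proof (rule that[OF d])
    fix h :: complex assume h: "norm h \<le> d"
    have "norm (f h) \<le> C * norm h" using 1(3)[of h] h by (auto simp: d_def)
    also have "\<dots> \<le> (C + 1) * (e / (C + 1))"
      using h 1(1) by (intro mult_mono) (auto simp: d_def)
    also have "\<dots> = e" using 1(1) by simp
    finally show "norm (f h) \<le> e" .
  qed
qed

lemma bo_div:
  assumes "bo f k" "m > 0" "\<epsilon> > 0" "\<And>h. norm h \<le> \<epsilon> \<Longrightarrow> norm (g h) \<ge> m"
  shows "bo (\<lambda>h. f h / g h) k"
proof -
  obtain C e where 1: "C \<ge> 0" "e > 0" "\<And>h. norm h \<le> e \<Longrightarrow> norm (f h) \<le> C * norm h ^ k"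
    using assms(1) unfolding bo_def by blast
  show ?thesis
  proof (rule boI[of "C / m" "min e \<epsilon>"])
    fix h :: complex assume h: "norm h \<le> min e \<epsilon>"
    have g: "norm (g h) \<ge> m" using assms(4) h by auto
    have "norm (f h / g h) = norm (f h) / norm (g h)" by (simp add: norm_divide)
    also have "\<dots> \<le> (C * norm h ^ k) / m"
      using 1(3)[of h] h g assms(2) 1(1) by (intro frac_le) (auto simp: zero_le_mult_iff)
    finally show "norm (f h / g h) \<le> C / m * norm h ^ k" by simp
  qed (use 1 assms in auto)
qed

lemma bo_lower:
  assumes "bo (\<lambda>h. g h - g0) 1" "g0 \<noteq> 0"
  obtains \<epsilon> where "\<epsilon> > 0" "\<And>h. norm h \<le> \<epsilon> \<Longrightarrow> norm (g h) \<ge> norm g0 / 2"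
proof -
  obtain \<epsilon> where e: "\<epsilon> > 0" "\<And>h. norm h \<le> \<epsilon> \<Longrightarrow> norm (g h - g0) \<le> norm g0 / 2"
    using bo_small[OF assms(1), of "norm g0 / 2"] assms(2) by auto
  show ?thesis
  proof (rule that[OF e(1)])
    fix h :: complex assume "norm h \<le> \<epsilon>"
    then have "norm (g h - g0) \<le> norm g0 / 2" by (rule e(2))
    then show "norm (g h) \<ge> norm g0 / 2"
      using norm_triangle_ineq2[of g0 "g0 - g h"] by (simp add: norm_minus_commute)
  qed
qed

lemma exp_taylor3:
  fixes w :: complex
  shows "norm (exp w - (1 + w + w^2/2)) \<le> norm w ^ 3 * exp (norm w)"
  using exp_taylor[of w 3] by (simp add: eval_nat_numeral)

lemma bo_exp:
  assumes "bo E k" "k \<ge> 1"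
  shows "bo (\<lambda>h. exp (E h) - (1 + E h + (E h)^2/2)) (3 * k)"
proof -
  obtain C e where 1: "C \<ge> 0" "e > 0" "\<And>h. norm h \<le> e \<Longrightarrow> norm (E h) \<le> C * norm h ^ k"
    using assms(1) unfolding bo_def by blast
  obtain d where d: "d > 0" "\<And>h. norm h \<le> d \<Longrightarrow> norm (E h) \<le> 1"
    using bo_small[OF assms, of 1] by auto
  show ?thesis
  proof (rule boI[of "C^3 * exp 1" "min e d"])
    fix h :: complex assume h: "norm h \<le> min e d"
    have "norm (exp (E h) - (1 + E h + (E h)^2/2)) \<le> norm (E h) ^ 3 * exp (norm (E h))"
      by (rule exp_taylor3)
    also have "\<dots> \<le> (C * norm h ^ k) ^ 3 * exp 1"
      using 1(3)[of h] d(2)[of h] h 1(1) by (intro mult_mono power_mono) (auto simp: zero_le_mult_iff)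
    finally show "norm (exp (E h) - (1 + E h + (E h)^2/2)) \<le> C^3 * exp 1 * norm h ^ (3 * k)"
      by (simp add: power_mult_distrib power_mult mult_ac)
  qed (use 1 d in auto)
qed

lemma bo_cosh:
  "bo (\<lambda>h. (exp h + exp (-h))/2 - (1 + h^2/2 + h^4/24)) 6"
proof (rule boI[of "exp 1" 1])
  fix h :: complex assume h: "norm h \<le> 1"
  have a: "norm (exp h - (\<Sum>n<6. h^n / of_real (fact n))) \<le> norm h ^ 6 * exp (norm h)"
    by (rule exp_taylor)
  have b: "norm (exp (-h) - (\<Sum>n<6. (-h)^n / of_real (fact n))) \<le> norm h ^ 6 * exp (norm h)"
    using exp_taylor[of "-h" 6] by simp
  have eq: "(exp h + exp (-h))/2 - (1 + h^2/2 + h^4/24) =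
     ((exp h - (\<Sum>n<6. h^n / of_real (fact n))) + (exp (-h) - (\<Sum>n<6. (-h)^n / of_real (fact n)))) / 2"
    by (simp add: eval_nat_numeral fact_numeral lessThan_Suc)
  have "norm ((exp h + exp (-h))/2 - (1 + h^2/2 + h^4/24)) \<le> (norm h ^ 6 * exp (norm h) + norm h ^ 6 * exp (norm h)) / 2"
    unfolding eq norm_divide using norm_triangle_le[OF add_mono[OF a b]] by simp
  also have "\<dots> \<le> exp 1 * norm h ^ 6" using h by (simp add: mult_right_mono)
  finally show "norm ((exp h + exp (-h))/2 - (1 + h^2/2 + h^4/24)) \<le> exp 1 * norm h ^ 6" .
qed auto

lemma sqrt_approx:
  fixes x :: complex
  assumes x: "norm x \<le> 1/2"
  shows "norm (csqrt (1 + x) - (1 + x/2 - x^2/8)) \<le> norm x ^ 3"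
proof -
  define s where "s = csqrt (1 + x)"
  define P where "P = 1 + x/2 - x^2/8"
  have s2: "s^2 = 1 + x" by (simp add: s_def)
  have "Re P \<ge> 1 - norm x / 2 - norm x ^ 2 / 8"
  proof -
    have "Re x \<ge> - norm x" using abs_Re_le_cmod[of x] by linarith
    moreover have "Re (x^2) \<le> norm x ^ 2" using complex_Re_le_cmod[of "x^2"] by (simp add: norm_power)
    ultimately show ?thesis by (simp add: P_def)
  qed
  moreover have "norm x ^ 2 \<le> 1/4" using x power_mono[of "norm x" "1/2" 2] by (simp add: power_divide)
  ultimately have ReP: "Re P \<ge> 23/32" using x by linarith
  have Res: "Re s \<ge> 0" unfolding s_def by (rule Re_csqrt)
  have sp: "norm (s + P) \<ge> 23/32"
    using complex_Re_le_cmod[of "s + P"] ReP Res by simp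
  have diff: "s - P = (x^3/8 - x^4/64) / (s + P)"
  proof -
    have "s + P \<noteq> 0" using sp by auto
    moreover have "(s - P) * (s + P) = x^3/8 - x^4/64"
    proof -
      have "(s - P) * (s + P) = s^2 - P^2" by (simp add: algebra_simps power2_eq_square)
      also have "\<dots> = 1 + x - (1 + x/2 - x^2/8)^2" by (simp add: s2 P_def)
      also have "\<dots> = x^3/8 - x^4/64" by (simp add: field_simps eval_nat_numeral)
      finally show ?thesis .
    qed
    ultimately show ?thesis by (simp add: eq_divide_eq)
  qed
  have "norm (x^3/8 - x^4/64) \<le> norm x ^ 3 / 8 + norm x ^ 4 / 64"
    using norm_triangle_ineq4[of "x^3/8" "x^4/64"] by (simp add: norm_power norm_divide)
  also have "\<dots> \<le> norm x ^ 3 * (23/32)"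
  proof -
    have "norm x ^ 4 \<le> norm x ^ 3" using x by (intro power_decreasing) auto
    then show ?thesis using zero_le_power[OF norm_ge_zero[of x], of 3] by linarith
  qed
  finally have "norm (s - P) \<le> norm x ^ 3 * (23/32) / (23/32)"
    unfolding diff norm_divide using sp by (intro frac_le) auto
  then show ?thesis by (simp add: s_def P_def)
qed

lemma bo_sqrt:
  assumes "bo x k" "k \<ge> 1"
  shows "bo (\<lambda>h. csqrt (1 + x h) - (1 + x h/2 - (x h)^2/8)) (3 * k)"
proof -
  obtain C e where 1: "C \<ge> 0" "e > 0" "\<And>h. norm h \<le> e \<Longrightarrow> norm (x h) \<le> C * norm h ^ k"
    using assms(1) unfolding bo_def by blast
  obtain d where d: "d > 0" "\<And>h. norm h \<le> d \<Longrightarrow> norm (x h) \<le> 1/2"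
    using bo_small[OF assms, of "1/2"] by auto
  show ?thesis
  proof (rule boI[of "C^3" "min e d"])
    fix h :: complex assume h: "norm h \<le> min e d"
    have "norm (csqrt (1 + x h) - (1 + x h/2 - (x h)^2/8)) \<le> norm (x h) ^ 3"
      using d(2)[of h] h by (intro sqrt_approx) auto
    also have "\<dots> \<le> (C * norm h ^ k) ^ 3"
      using 1(3)[of h] h by (intro power_mono) auto
    finally show "norm (csqrt (1 + x h) - (1 + x h/2 - (x h)^2/8)) \<le> C^3 * norm h ^ (3 * k)"
      by (simp add: power_mult_distrib power_mult mult_ac)
  qed (use 1 d in auto)
qed



lemma bo_monom: "bo (\<lambda>h. a * h^n) n"
  using bo_mult[OF bo_const[of a] bo_pow[OF bo_id, of n]] by simp

lemma bo_monom0: "bo (\<lambda>h. a * h^n) 0"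
  by (rule bo_mono[OF bo_monom]) simp

lemma bo_mult': "bo f a \<Longrightarrow> bo g b \<Longrightarrow> k = a + b \<Longrightarrow> bo (\<lambda>h. f h * g h) k"
  using bo_mult by blast

lemma bo_mono': "bo f k \<Longrightarrow> j \<le> k \<Longrightarrow> bo f j" by (rule bo_mono)

definition cc :: "complex \<Rightarrow> complex" where "cc h = (exp h + exp (-h))/2"
definition Pc :: "complex \<Rightarrow> complex" where "Pc h = 1 + h^2/2 + h^4/24"
definition xx :: "complex \<Rightarrow> complex \<Rightarrow> complex" where "xx r h = r^2 * ((cc h)^2 - 1)"
definition x0 :: "complex \<Rightarrow> complex \<Rightarrow> complex" where "x0 r h = r^2 * ((Pc h)^2 - 1)"
definition Ps :: "complex \<Rightarrow> complex" where "Ps y = 1 + y/2 - y^2/8"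
definition ss :: "complex \<Rightarrow> complex \<Rightarrow> complex" where "ss r h = csqrt (1 + xx r h)"
definition RR :: "complex \<Rightarrow> complex \<Rightarrow> complex" where "RR r h = (r * cc h + ss r h)/(r + 1)"
definition EE :: "complex \<Rightarrow> complex \<Rightarrow> complex" where "EE r h = r*h^2/2 + (r - 3*r^3)/24 * h^4"

lemma bo_cP: "bo (\<lambda>h. cc h - Pc h) 6"
  using bo_cosh unfolding cc_def Pc_def .

lemma bo_Pc1: "bo (\<lambda>h. Pc h - 1) 2"
proof -
  have "bo (\<lambda>h. (1/2) * h^2 + (1/24) * h^4) 2"
    by (intro bo_add bo_monom bo_mono'[OF bo_monom]) auto
  then show ?thesis by (rule bo_eq) (simp add: Pc_def)
qed

lemma bo_cc1: "bo (\<lambda>h. cc h - 1) 2"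
  using bo_add[OF bo_mono'[OF bo_cP, of 2] bo_Pc1] by simp

lemma bo_cc0: "bo cc 0"
  using bo_add[OF bo_mono'[OF bo_cc1, of 0] bo_const[of 1]] by simp

lemma bo_Pc0: "bo Pc 0"
  using bo_add[OF bo_mono'[OF bo_Pc1, of 0] bo_const[of 1]] by simp

lemma bo_xx: "bo (xx r) 2"
proof -
  have "bo (\<lambda>h. r^2 * ((cc h - 1) * (cc h + 1))) 2"
    by (rule bo_mult'[OF bo_const bo_mult'[OF bo_cc1 bo_add[OF bo_cc0 bo_const]]]) auto
  then show ?thesis by (rule bo_eq) (simp add: xx_def algebra_simps power2_eq_square)
qed

lemma bo_x0: "bo (x0 r) 2"
proof -
  have "bo (\<lambda>h. r^2 * ((Pc h - 1) * (Pc h + 1))) 2"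
    by (rule bo_mult'[OF bo_const bo_mult'[OF bo_Pc1 bo_add[OF bo_Pc0 bo_const]]]) auto
  then show ?thesis by (rule bo_eq) (simp add: x0_def algebra_simps power2_eq_square)
qed

lemma bo_xx0: "bo (\<lambda>h. xx r h - x0 r h) 6"
proof -
  have "bo (\<lambda>h. r^2 * ((cc h - Pc h) * (cc h + Pc h))) 6"
    by (rule bo_mult'[OF bo_const bo_mult'[OF bo_cP bo_add[OF bo_cc0 bo_Pc0]]]) auto
  then show ?thesis by (rule bo_eq) (simp add: xx_def x0_def algebra_simps power2_eq_square)
qed

lemma bo_sPs: "bo (\<lambda>h. ss r h - Ps (xx r h)) 6"
  using bo_sqrt[OF bo_xx[of r]] unfolding ss_def Ps_def by simp

lemma bo_Ps: "bo (\<lambda>h. Ps (xx r h) - Ps (x0 r h)) 6"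
proof -
  have "bo (\<lambda>h. (xx r h - x0 r h) * (1/2 - (xx r h + x0 r h)/8)) 6"
  proof (rule bo_mult'[OF bo_xx0])
    have "bo (\<lambda>h. (xx r h + x0 r h) * (1/8)) 0"
      by (rule bo_mult'[OF bo_add[OF bo_mono'[OF bo_xx] bo_mono'[OF bo_x0]] bo_const]) auto
    then have "bo (\<lambda>h. 1/2 - (xx r h + x0 r h) * (1/8)) 0"
      by (intro bo_diff bo_const)
    then show "bo (\<lambda>h. 1/2 - (xx r h + x0 r h)/8) 0" by (rule bo_eq) simp
  qed auto
  then show ?thesis by (rule bo_eq) (simp add: Ps_def field_simps power2_eq_square)
qed

lemma bo_ss1: "bo (\<lambda>h. ss r h - 1) 2"
proof -
  have "bo (\<lambda>h. (ss r h - Ps (xx r h)) + ((1/2) * xx r h - (1/8) * (xx r h)^2)) 2"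
  proof (rule bo_add[OF bo_mono'[OF bo_sPs]])
    have "bo (\<lambda>h. (1/8) * (xx r h)^2) 2"
      by (rule bo_mono'[OF bo_mult'[OF bo_const bo_pow[OF bo_xx]]]) auto
    then show "bo (\<lambda>h. (1/2) * xx r h - (1/8) * (xx r h)^2) 2"
      by (intro bo_diff bo_mult'[OF bo_const bo_xx]) auto
  qed auto
  then show ?thesis by (rule bo_eq) (simp add: Ps_def)
qed

lemma bo_EE: "bo (EE r) 2"
proof -
  have "bo (\<lambda>h. (r/2) * h^2 + ((r - 3*r^3)/24) * h^4) 2"
    by (intro bo_add bo_monom bo_mono'[OF bo_monom]) auto
  then show ?thesis by (rule bo_eq) (simp add: EE_def)
qed

lemma poly_id:
  fixes h r :: complex
  shows "r * Pc h + Ps (x0 r h) - (r + 1) * (1 + EE r h + (EE r h)^2/2)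
   = h^6 * (((-1/48) * r^3 + (-1/48) * r^4 + (1/16) * r^5) + ((-1/1152) * r^3 + (-11/576) * r^4 + (1/192) * r^5 + (-1/128) * r^6 + (-1/128) * r^7) * h^2 + ((-1/256) * r^4) * h^4 + ((-5/13824) * r^4) * h^6 + ((-1/55296) * r^4) * h^8 + ((-1/2654208) * r^4) * h^10)"
  unfolding Pc_def Ps_def x0_def EE_def by (simp add: field_simps eval_nat_numeral)

lemma gen_id:
  fixes r a b c d0 d1 T X :: complex
  assumes "r + 1 \<noteq> 0"
  shows "(r * (a - b) + (c - d0) + (d0 - d1) + (r * b + d1 - (r + 1) * T)) * (1 / (r + 1)) - (X - T)
     = (r * a + c) / (r + 1) - X"
proof -
  have "(r * (a - b) + (c - d0) + (d0 - d1) + (r * b + d1 - (r + 1) * T)) = (r * a + c) - (r + 1) * T"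
    by (simp add: algebra_simps)
  then show ?thesis using assms by (simp add: field_simps)
qed

lemma bo_RE:
  assumes r: "r + 1 \<noteq> 0"
  shows "bo (\<lambda>h. RR r h - exp (EE r h)) 6"
proof -
  define Q where "Q h = (((-1/48) * r^3 + (-1/48) * r^4 + (1/16) * r^5) + ((-1/1152) * r^3 + (-11/576) * r^4 + (1/192) * r^5 + (-1/128) * r^6 + (-1/128) * r^7) * h^2 + ((-1/256) * r^4) * h^4 + ((-5/13824) * r^4) * h^6 + ((-1/55296) * r^4) * h^8 + ((-1/2654208) * r^4) * h^10)" for h
  have bQ: "bo Q 0" unfolding Q_def
    by (intro bo_add bo_const bo_monom0)
  have b1: "bo (\<lambda>h. h^6 * Q h) 6"
    by (rule bo_mult'[OF bo_pow[OF bo_id] bQ]) auto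
  have b2: "bo (\<lambda>h. (r * (cc h - Pc h) + (ss r h - Ps (xx r h)) + (Ps (xx r h) - Ps (x0 r h))
                 + h^6 * Q h) * (1 / (r + 1))) 6"
    by (rule bo_mult'[OF bo_add[OF bo_add[OF bo_add[OF bo_mult'[OF bo_const bo_cP] bo_sPs] bo_Ps] b1] bo_const]) auto
  have b3: "bo (\<lambda>h. exp (EE r h) - (1 + EE r h + (EE r h)^2/2)) 6"
    using bo_exp[OF bo_EE[of r]] by simp
  have "bo (\<lambda>h. (r * (cc h - Pc h) + (ss r h - Ps (xx r h)) + (Ps (xx r h) - Ps (x0 r h))
                 + h^6 * Q h) * (1 / (r + 1)) - (exp (EE r h) - (1 + EE r h + (EE r h)^2/2))) 6"
    by (rule bo_diff[OF b2 b3])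
  then show ?thesis
  proof (rule bo_eq)
    fix h
    have pid: "h^6 * Q h = r * Pc h + Ps (x0 r h) - (r + 1) * (1 + EE r h + (EE r h)^2/2)"
      unfolding Q_def poly_id ..
    show "(r * (cc h - Pc h) + (ss r h - Ps (xx r h)) + (Ps (xx r h) - Ps (x0 r h))
                 + h^6 * Q h) * (1 / (r + 1)) - (exp (EE r h) - (1 + EE r h + (EE r h)^2/2))
          = RR r h - exp (EE r h)"
      unfolding pid RR_def using gen_id[OF r] .
  qed
qed



lemma sum_spin_Suc:
  fixes g :: "(nat \<Rightarrow> real) \<Rightarrow> 'a::comm_monoid_add"
  shows "(\<Sum>\<sigma>\<in>spin_configs (Suc n). g \<sigma>) =
         (\<Sum>\<sigma>\<in>spin_configs n. g (\<sigma>(Suc n := -1)) + g (\<sigma>(Suc n := 1)))"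
proof -
  have ins: "{1..Suc n} = insert (Suc n) {1..n}" by auto
  have nin: "Suc n \<notin> {1..n}" by auto
  have "spin_configs (Suc n) = (\<lambda>(y, f). f(Suc n := y)) ` ({-1, 1::real} \<times> PiE {1..n} (\<lambda>_. {-1, 1}))"
    unfolding spin_configs_def ins PiE_insert_eq ..
  then have "(\<Sum>\<sigma>\<in>spin_configs (Suc n). g \<sigma>) =
      (\<Sum>\<sigma>\<in>{-1, 1::real} \<times> PiE {1..n} (\<lambda>_. {-1, 1}). g ((\<lambda>(y, f). f(Suc n := y)) \<sigma>))"
    using sum.reindex[OF inj_combinator[OF nin, of "\<lambda>_. {-1, 1::real}"], of g] by simp
  also have "\<dots> = (\<Sum>y\<in>{-1, 1::real}. \<Sum>f\<in>PiE {1..n} (\<lambda>_. {-1, 1}). g (f(Suc n := y)))"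
    by (subst sum.cartesian_product) (simp add: case_prod_beta)
  also have "\<dots> = (\<Sum>f\<in>spin_configs n. g (f(Suc n := -1)) + g (f(Suc n := 1)))"
    by (simp add: sum.distrib spin_configs_def)
  finally show ?thesis .
qed

definition W :: "real \<Rightarrow> nat \<Rightarrow> complex \<Rightarrow> (nat \<Rightarrow> real) \<Rightarrow> complex" where
  "W \<beta> n h \<sigma> = of_real (exp (\<beta> * (\<Sum>i=1..n-1. \<sigma> i * \<sigma> (i+1)))) * exp (h * of_real (\<Sum>i=1..n. \<sigma> i))"

definition NN :: "real \<Rightarrow> nat \<Rightarrow> complex \<Rightarrow> complex" where
  "NN \<beta> n h = (\<Sum>\<sigma>\<in>spin_configs n. W \<beta> n h \<sigma>)"

definition FF :: "real \<Rightarrow> nat \<Rightarrow> complex \<Rightarrow> real \<Rightarrow> complex" where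
  "FF \<beta> n h t = (\<Sum>\<sigma>\<in>spin_configs n. W \<beta> n h \<sigma> * of_real (exp (\<beta> * \<sigma> n * t)))"

lemma W_step:
  assumes "n \<ge> 1"
  shows "W \<beta> (Suc n) h (\<sigma>(Suc n := y)) = W \<beta> n h \<sigma> * of_real (exp (\<beta> * \<sigma> n * y)) * exp (h * of_real y)"
proof -
  obtain m where m: "n = Suc m" using assms by (cases n) auto
  have s1: "(\<Sum>i=1..Suc n - 1. (\<sigma>(Suc n := y)) i * (\<sigma>(Suc n := y)) (i+1)) =
        (\<Sum>i=1..n-1. \<sigma> i * \<sigma> (i+1)) + \<sigma> n * y"
  proof -
    have "(\<Sum>i=1..Suc m. (\<sigma>(Suc n := y)) i * (\<sigma>(Suc n := y)) (i+1)) =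
          (\<Sum>i=1..m. (\<sigma>(Suc n := y)) i * (\<sigma>(Suc n := y)) (i+1)) + \<sigma> n * y"
      using m by simp
    also have "(\<Sum>i=1..m. (\<sigma>(Suc n := y)) i * (\<sigma>(Suc n := y)) (i+1)) = (\<Sum>i=1..m. \<sigma> i * \<sigma> (i+1))"
      using m by (intro sum.cong) auto
    finally show ?thesis using m by simp
  qed
  have s2: "(\<Sum>i=1..Suc n. (\<sigma>(Suc n := y)) i) = (\<Sum>i=1..n. \<sigma> i) + y"
  proof -
    have "(\<Sum>i=1..n. (\<sigma>(Suc n := y)) i) = (\<Sum>i=1..n. \<sigma> i)" by (intro sum.cong) auto
    then show ?thesis by simp
  qed
  show ?thesis
    unfolding W_def s1 s2 by (simp add: distrib_left exp_add distrib_right mult_ac)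
qed

lemma W_one: "W \<beta> (Suc 0) h ((\<lambda>x. undefined)(Suc 0 := y)) = exp (h * of_real y)"
  by (simp add: W_def)

lemma NN_Suc:
  assumes "n \<ge> 1"
  shows "NN \<beta> (Suc n) h = exp h * FF \<beta> n h 1 + exp (-h) * FF \<beta> n h (-1)"
  unfolding NN_def FF_def sum_spin_Suc W_step[OF assms]
  by (simp add: sum_distrib_left sum.distrib algebra_simps)

lemma FF_Suc:
  assumes "n \<ge> 1"
  shows "FF \<beta> (Suc n) h t = exp h * of_real (exp (\<beta> * t)) * FF \<beta> n h 1
            + exp (-h) * of_real (exp (- \<beta> * t)) * FF \<beta> n h (-1)"
  unfolding FF_def sum_spin_Suc W_step[OF assms]
  by (simp add: sum_distrib_left sum.distrib algebra_simps)

lemma NN_one: "NN \<beta> (Suc 0) h = exp h + exp (-h)"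
  unfolding NN_def sum_spin_Suc[of _ 0] by (simp add: spin_configs_def W_one)

lemma FF_one: "FF \<beta> (Suc 0) h t = exp h * of_real (exp (\<beta> * t)) + exp (-h) * of_real (exp (- \<beta> * t))"
  unfolding FF_def sum_spin_Suc[of _ 0] by (simp add: spin_configs_def W_one)



fun ab :: "real \<Rightarrow> complex \<Rightarrow> nat \<Rightarrow> complex \<times> complex" where
  "ab \<beta> h 0 = (1, 1)"
| "ab \<beta> h (Suc k) =
    (exp h * of_real (exp \<beta>) * fst (ab \<beta> h k) + exp (-h) * of_real (exp (-\<beta>)) * snd (ab \<beta> h k),
     exp h * of_real (exp (-\<beta>)) * fst (ab \<beta> h k) + exp (-h) * of_real (exp \<beta>) * snd (ab \<beta> h k))"

lemma FF_ab: "k \<ge> 1 \<Longrightarrow> FF \<beta> k h 1 = fst (ab \<beta> h k) \<and> FF \<beta> k h (-1) = snd (ab \<beta> h k)"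
proof (induction k)
  case 0 then show ?case by simp
next
  case (Suc k)
  show ?case
  proof (cases "k = 0")
    case True then show ?thesis by (simp add: FF_one)
  next
    case False
    then have "k \<ge> 1" by simp
    with Suc.IH have ih: "FF \<beta> k h 1 = fst (ab \<beta> h k)" "FF \<beta> k h (-1) = snd (ab \<beta> h k)" by auto
    show ?thesis using \<open>k \<ge> 1\<close> by (simp add: FF_Suc ih)
  qed
qed

lemma NN_ab: "NN \<beta> (Suc k) h = exp h * fst (ab \<beta> h k) + exp (-h) * snd (ab \<beta> h k)"
proof (cases "k = 0")
  case True then show ?thesis by (simp add: NN_one)
next
  case False
  then have k: "k \<ge> 1" by simp
  show ?thesis using FF_ab[OF k] by (simp add: NN_Suc[OF k])
qed

lemma ch2:
  fixes m11 m12 m21 m22 a0 b0 a1 b1 a2 b2 :: complex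
  assumes "a1 = m11*a0 + m12*b0" "b1 = m21*a0 + m22*b0" "a2 = m11*a1 + m12*b1" "b2 = m21*a1 + m22*b1"
  shows "a2 = (m11+m22)*a1 - (m11*m22 - m12*m21)*a0" "b2 = (m11+m22)*b1 - (m11*m22 - m12*m21)*b0"
  using assms by (simp_all add: algebra_simps)

lemma NN_rec:
  "NN \<beta> (Suc (Suc (Suc k))) h =
     (of_real (exp \<beta>) * (exp h + exp (-h))) * NN \<beta> (Suc (Suc k)) h
     - (of_real (exp \<beta>)^2 - of_real (exp (-\<beta>))^2) * NN \<beta> (Suc k) h"
proof -
  define m11 :: complex where "m11 = exp h * of_real (exp \<beta>)"
  define m12 :: complex where "m12 = exp (-h) * of_real (exp (-\<beta>))"
  define m21 :: complex where "m21 = exp h * of_real (exp (-\<beta>))"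
  define m22 :: complex where "m22 = exp (-h) * of_real (exp \<beta>)"
  have d: "m11*m22 - m12*m21 = of_real (exp \<beta>)^2 - of_real (exp (-\<beta>))^2"
  proof -
    have "exp h * exp (-h) = (1::complex)" by (simp add: exp_minus field_simps)
    moreover have "m11*m22 - m12*m21 = (exp h * exp (-h)) * (of_real (exp \<beta>)^2 - of_real (exp (-\<beta>))^2)"
      unfolding m11_def m12_def m21_def m22_def by (simp add: algebra_simps power2_eq_square)
    ultimately show ?thesis by simp
  qed
  have t: "m11 + m22 = of_real (exp \<beta>) * (exp h + exp (-h))" by (simp add: m11_def m22_def algebra_simps)
  have e: "fst (ab \<beta> h (Suc j)) = m11 * fst (ab \<beta> h j) + m12 * snd (ab \<beta> h j)"
          "snd (ab \<beta> h (Suc j)) = m21 * fst (ab \<beta> h j) + m22 * snd (ab \<beta> h j)" for j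
    by (simp_all add: m11_def m12_def m21_def m22_def)
  note c = ch2[OF e(1)[of k] e(2)[of k] e(1)[of "Suc k"] e(2)[of "Suc k"]]
  show ?thesis unfolding NN_ab c d t by (simp add: algebra_simps)
qed

lemma lin_rec:
  fixes v :: "nat \<Rightarrow> complex"
  assumes rec: "\<And>k. v (Suc (Suc k)) = T * v (Suc k) - D * v k"
    and l1: "l1^2 = T * l1 - D" and l2: "l2^2 = T * l2 - D"
    and v0: "v 0 = A + B" and v1: "v 1 = A * l1 + B * l2"
  shows "v k = A * l1^k + B * l2^k"
proof -
  have "v k = A * l1^k + B * l2^k \<and> v (Suc k) = A * l1^Suc k + B * l2^Suc k" for k
  proof (induction k)
    case 0 then show ?case using v0 v1 by simp
  next
    case (Suc k)
    then have "v (Suc (Suc k)) = T * (A * l1^Suc k + B * l2^Suc k) - D * (A * l1^k + B * l2^k)"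
      using rec by simp
    also have "\<dots> = A * l1^k * (T * l1 - D) + B * l2^k * (T * l2 - D)"
      by (simp add: algebra_simps)
    also have "\<dots> = A * l1^Suc (Suc k) + B * l2^Suc (Suc k)"
      unfolding l1[symmetric] l2[symmetric] by (simp add: power2_eq_square)
    finally show ?case using Suc by simp
  qed
  then show ?thesis by simp
qed

definition lp :: "real \<Rightarrow> complex \<Rightarrow> complex" where
  "lp \<beta> h = of_real (exp \<beta>) * cc h + of_real (exp (-\<beta>)) * ss (of_real (exp (2*\<beta>))) h"
definition lm :: "real \<Rightarrow> complex \<Rightarrow> complex" where
  "lm \<beta> h = of_real (exp \<beta>) * cc h - of_real (exp (-\<beta>)) * ss (of_real (exp (2*\<beta>))) h"
definition AA :: "real \<Rightarrow> complex \<Rightarrow> complex" where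
  "AA \<beta> h = (NN \<beta> 2 h - lm \<beta> h * NN \<beta> 1 h) / (lp \<beta> h - lm \<beta> h)"
definition BB :: "real \<Rightarrow> complex \<Rightarrow> complex" where
  "BB \<beta> h = (lp \<beta> h * NN \<beta> 1 h - NN \<beta> 2 h) / (lp \<beta> h - lm \<beta> h)"

lemma exp_rel: fixes \<beta> :: real shows "exp (-\<beta>) * exp (2*\<beta>) = exp \<beta>" "exp \<beta> * exp (-\<beta>) = 1"
  by (simp_all add: exp_add[symmetric])

lemma root:
  assumes "l = lp \<beta> h \<or> l = lm \<beta> h"
  shows "l^2 = (of_real (exp \<beta>) * (exp h + exp (-h))) * l - (of_real (exp \<beta>)^2 - of_real (exp (-\<beta>))^2)"
proof -
  define P where "P = (of_real (exp \<beta>) :: complex)"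
  define Q where "Q = (of_real (exp (-\<beta>)) :: complex)"
  define r where "r = (of_real (exp (2*\<beta>)) :: complex)"
  have Qr: "Q * r = P" unfolding P_def Q_def r_def by (simp flip: of_real_mult add: exp_rel)
  define s where "s = ss r (h::complex)"
  have s2: "s^2 = 1 + r^2 * ((cc h)^2 - 1)" by (simp add: s_def ss_def xx_def)
  have T: "exp h + exp (-h) = 2 * cc h" by (simp add: cc_def)
  have key: "Q^2 * s^2 = Q^2 + P^2 * ((cc h)^2 - 1)"
    unfolding s2 Qr[symmetric] by (simp add: algebra_simps power2_eq_square)
  have "l = P * cc h + Q * s \<or> l = P * cc h - Q * s"
    using assms by (simp add: lp_def lm_def P_def Q_def r_def s_def)
  then show ?thesis unfolding P_def[symmetric] Q_def[symmetric] T
  proof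
    assume l: "l = P * cc h + Q * s"
    show "l^2 = P * (2 * cc h) * l - (P^2 - Q^2)"
      unfolding l using key by (simp add: algebra_simps power2_eq_square)
  next
    assume l: "l = P * cc h - Q * s"
    show "l^2 = P * (2 * cc h) * l - (P^2 - Q^2)"
      unfolding l using key by (simp add: algebra_simps power2_eq_square)
  qed
qed

lemma closed_form:
  assumes "lp \<beta> h \<noteq> lm \<beta> h"
  shows "NN \<beta> (Suc k) h = AA \<beta> h * lp \<beta> h ^ k + BB \<beta> h * lm \<beta> h ^ k"
proof -
  define T where "T = (of_real (exp \<beta>) * (exp h + exp (-h)) :: complex)"
  define D where "D = (of_real (exp \<beta>)^2 - of_real (exp (-\<beta>))^2 :: complex)"
  have rec: "\<And>k. (\<lambda>k. NN \<beta> (Suc k) h) (Suc (Suc k)) = T * (\<lambda>k. NN \<beta> (Suc k) h) (Suc k) - D * (\<lambda>k. NN \<beta> (Suc k) h) k"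
    unfolding T_def D_def by (simp add: NN_rec)
  have r1: "(lp \<beta> h)^2 = T * lp \<beta> h - D" unfolding T_def D_def by (rule root) simp
  have r2: "(lm \<beta> h)^2 = T * lm \<beta> h - D" unfolding T_def D_def by (rule root) simp
  have "(\<lambda>k. NN \<beta> (Suc k) h) k = AA \<beta> h * lp \<beta> h ^ k + BB \<beta> h * lm \<beta> h ^ k"
  proof (rule lin_rec[where v="\<lambda>k. NN \<beta> (Suc k) h", OF rec r1 r2])
    have "AA \<beta> h + BB \<beta> h = ((lp \<beta> h - lm \<beta> h) * NN \<beta> 1 h) / (lp \<beta> h - lm \<beta> h)"
      unfolding AA_def BB_def add_divide_distrib[symmetric] by (simp add: algebra_simps)
    then show "NN \<beta> (Suc 0) h = AA \<beta> h + BB \<beta> h"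
      using assms by simp
    have "AA \<beta> h * lp \<beta> h + BB \<beta> h * lm \<beta> h = ((lp \<beta> h - lm \<beta> h) * NN \<beta> 2 h) / (lp \<beta> h - lm \<beta> h)"
      unfolding AA_def BB_def times_divide_eq_left add_divide_distrib[symmetric] by (simp add: algebra_simps)
    then show "NN \<beta> (Suc 1) h = AA \<beta> h * lp \<beta> h + BB \<beta> h * lm \<beta> h"
      using assms by (simp add: numeral_2_eq_2)
  qed
  then show ?thesis by simp
qed




lemma bo_eq_near:
  assumes "bo f k" "e > 0" "\<And>h. norm h \<le> e \<Longrightarrow> f h = g h"
  shows "bo g k"
proof -
  obtain C d where 1: "C \<ge> 0" "d > 0" "\<And>h. norm h \<le> d \<Longrightarrow> norm (f h) \<le> C * norm h ^ k"
    using assms(1) unfolding bo_def by blast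
  show ?thesis
  proof (rule boI[of C "min d e"])
    fix h :: complex assume h: "norm h \<le> min d e"
    then show "norm (g h) \<le> C * norm h ^ k" using 1(3)[of h] assms(3)[of h] by simp
  qed (use 1 assms in auto)
qed

lemma cc0: "cc 0 = 1" by (simp add: cc_def)
lemma ss0: "ss r 0 = 1" by (simp add: ss_def xx_def cc0)

lemma NN1: "NN \<beta> 1 h = 2 * cc h"
  using NN_ab[of \<beta> 0 h] by (simp add: cc_def)

lemma NN1': "NN \<beta> (Suc 0) h = 2 * cc h"
  using NN1 by simp

lemma NN2: "NN \<beta> 2 h = 2 * of_real (exp \<beta>) * cc (2*h) + 2 * of_real (exp (-\<beta>))"
proof -
  have e: "exp h * exp h = exp (2*h)" "exp (-h) * exp (-h) = exp (-(2*h))" "exp h * exp (-h) = 1"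
    by (simp_all flip: exp_add)
  have "NN \<beta> 2 h = NN \<beta> (Suc 1) h" by (simp add: numeral_2_eq_2)
  also have "\<dots> = exp h * (exp h * of_real (exp \<beta>) + exp (-h) * of_real (exp (-\<beta>)))
      + exp (-h) * (exp h * of_real (exp (-\<beta>)) + exp (-h) * of_real (exp \<beta>))"
    unfolding NN_ab by simp
  also have "\<dots> = of_real (exp \<beta>) * (exp h * exp h + exp (-h) * exp (-h)) + 2 * (exp h * exp (-h)) * of_real (exp (-\<beta>))"
    by (simp add: algebra_simps)
  also have "\<dots> = 2 * of_real (exp \<beta>) * cc (2*h) + 2 * of_real (exp (-\<beta>))"
    unfolding e by (simp add: cc_def)
  finally show ?thesis .
qed

lemma bo_scale2: "bo f k \<Longrightarrow> bo (\<lambda>h. f (2*h)) k"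
proof -
  assume "bo f k"
  then obtain C e where 1: "C \<ge> 0" "e > 0" "\<And>h. norm h \<le> e \<Longrightarrow> norm (f h) \<le> C * norm h ^ k"
    unfolding bo_def by blast
  show ?thesis
  proof (rule boI[of "C * 2^k" "e/2"])
    fix h :: complex assume "norm h \<le> e/2"
    then have "norm (2*h) \<le> e" by (simp add: norm_mult)
    then have "norm (f (2*h)) \<le> C * norm (2*h) ^ k" by (rule 1(3))
    then show "norm (f (2*h)) \<le> C * 2^k * norm h ^ k" by (simp add: norm_mult power_mult_distrib mult_ac)
  qed (use 1 in auto)
qed

abbreviation "Pb \<beta> \<equiv> (of_real (exp \<beta>) :: complex)"
abbreviation "Qb \<beta> \<equiv> (of_real (exp (-\<beta>)) :: complex)"
abbreviation "rb \<beta> \<equiv> (of_real (exp (2*\<beta>)) :: complex)"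

lemma lp0: "lp \<beta> 0 = Pb \<beta> + Qb \<beta>" by (simp add: lp_def cc0 ss0)
lemma lm0: "lm \<beta> 0 = Pb \<beta> - Qb \<beta>" by (simp add: lm_def cc0 ss0)

lemma bo_lp: "bo (\<lambda>h. lp \<beta> h - (Pb \<beta> + Qb \<beta>)) 2"
proof -
  have "bo (\<lambda>h. Pb \<beta> * (cc h - 1) + Qb \<beta> * (ss (rb \<beta>) h - 1)) 2"
    by (rule bo_add[OF bo_mult'[OF bo_const bo_cc1] bo_mult'[OF bo_const bo_ss1]]) auto
  then show ?thesis by (rule bo_eq) (simp add: lp_def algebra_simps)
qed

lemma bo_lm: "bo (\<lambda>h. lm \<beta> h - (Pb \<beta> - Qb \<beta>)) 2"
proof -
  have "bo (\<lambda>h. Pb \<beta> * (cc h - 1) - Qb \<beta> * (ss (rb \<beta>) h - 1)) 2"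
    by (rule bo_diff[OF bo_mult'[OF bo_const bo_cc1] bo_mult'[OF bo_const bo_ss1]]) auto
  then show ?thesis by (rule bo_eq) (simp add: lm_def algebra_simps)
qed

lemma bo_N1: "bo (\<lambda>h. NN \<beta> 1 h - 2) 2"
  using bo_mult'[OF bo_const[of 2] bo_cc1] by (rule bo_eq) (auto simp: NN1 NN1' algebra_simps)

lemma bo_N2: "bo (\<lambda>h. NN \<beta> 2 h - (2 * Pb \<beta> + 2 * Qb \<beta>)) 2"
  using bo_mult'[OF bo_const[of "2 * Pb \<beta>"] bo_scale2[OF bo_cc1]] by (rule bo_eq) (auto simp: NN2 algebra_simps)

lemma lp_lm: "lp \<beta> h - lm \<beta> h = 2 * Qb \<beta> * ss (rb \<beta>) h"
  by (simp add: lp_def lm_def)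

lemma ss_lower: obtains e where "e > 0" "\<And>h. norm h \<le> e \<Longrightarrow> norm (ss r h) \<ge> 1/2"
  using bo_lower[of "ss r" 1] bo_mono'[OF bo_ss1[of r], of 1] by auto

lemma denom_lower: obtains e where "e > 0" "\<And>h. norm h \<le> e \<Longrightarrow> norm (lp \<beta> h - lm \<beta> h) \<ge> exp (-\<beta>)"
proof -
  obtain e where e: "e > 0" "\<And>h. norm h \<le> e \<Longrightarrow> norm (ss (rb \<beta>) h) \<ge> 1/2"
    using ss_lower[of "rb \<beta>"] by blast
  show ?thesis
  proof (rule that[OF e(1)])
    fix h :: complex assume "norm h \<le> e"
    then have "norm (ss (rb \<beta>) h) \<ge> 1/2" by (rule e(2))
    then show "norm (lp \<beta> h - lm \<beta> h) \<ge> exp (-\<beta>)"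
      unfolding lp_lm by (simp add: norm_mult)
  qed
qed

lemma bo_AA: "bo (\<lambda>h. AA \<beta> h - 2) 2"
proof -
  obtain e where e: "e > 0" "\<And>h. norm h \<le> e \<Longrightarrow> norm (lp \<beta> h - lm \<beta> h) \<ge> exp (-\<beta>)"
    using denom_lower[of \<beta>] by blast
  define a where "a = Pb \<beta> + Qb \<beta>"
  define b where "b = Pb \<beta> - Qb \<beta>"
  have num: "bo (\<lambda>h. (NN \<beta> 2 h - (2 * Pb \<beta> + 2 * Qb \<beta>)) - ((lm \<beta> h - b) * NN \<beta> 1 h + b * (NN \<beta> 1 h - 2))
       - 2 * ((lp \<beta> h - a) - (lm \<beta> h - b))) 2"
  proof (rule bo_diff[OF bo_diff])
    show "bo (\<lambda>h. NN \<beta> 2 h - (2 * Pb \<beta> + 2 * Qb \<beta>)) 2" by (rule bo_N2)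
    have N10: "bo (\<lambda>h. NN \<beta> 1 h) 0"
      using bo_add[OF bo_mono'[OF bo_N1, of 0] bo_const[of 2]] by simp
    show "bo (\<lambda>h. (lm \<beta> h - b) * NN \<beta> 1 h + b * (NN \<beta> 1 h - 2)) 2"
      by (rule bo_add[OF bo_mult'[OF bo_lm[of \<beta>, folded b_def] N10] bo_mult'[OF bo_const bo_N1]]) auto
    show "bo (\<lambda>h. 2 * (lp \<beta> h - a - (lm \<beta> h - b))) 2"
      by (rule bo_mult'[OF bo_const bo_diff[OF bo_lp[of \<beta>, folded a_def] bo_lm[of \<beta>, folded b_def]]]) auto
  qed
  have "bo (\<lambda>h. ((NN \<beta> 2 h - (2 * Pb \<beta> + 2 * Qb \<beta>)) - ((lm \<beta> h - b) * NN \<beta> 1 h + b * (NN \<beta> 1 h - 2))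
       - 2 * ((lp \<beta> h - a) - (lm \<beta> h - b))) / (lp \<beta> h - lm \<beta> h)) 2"
    by (rule bo_div[OF num _ e(1) e(2)]) simp
  then show ?thesis
  proof -
    assume that: "bo (\<lambda>h. ((NN \<beta> 2 h - (2 * Pb \<beta> + 2 * Qb \<beta>)) - ((lm \<beta> h - b) * NN \<beta> 1 h + b * (NN \<beta> 1 h - 2))
       - 2 * ((lp \<beta> h - a) - (lm \<beta> h - b))) / (lp \<beta> h - lm \<beta> h)) 2"
    obtain e2 where e2: "e2 > 0" "\<And>h. norm h \<le> e2 \<Longrightarrow> norm (ss (rb \<beta>) h) \<ge> 1/2"
      using ss_lower[of "rb \<beta>"] by blast
    show ?thesis using that
  proof (rule bo_eq_near[OF _ e2(1)])
    fix h :: complex assume "norm h \<le> e2"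
    then have "norm (ss (rb \<beta>) h) \<ge> 1/2" by (rule e2(2))
    then have d: "lp \<beta> h - lm \<beta> h \<noteq> 0" unfolding lp_lm by auto
    have "AA \<beta> h - 2 = (NN \<beta> 2 h - lm \<beta> h * NN \<beta> 1 h - 2 * (lp \<beta> h - lm \<beta> h)) / (lp \<beta> h - lm \<beta> h)"
      unfolding AA_def using d by (simp add: field_simps)
    also have "NN \<beta> 2 h - lm \<beta> h * NN \<beta> 1 h - 2 * (lp \<beta> h - lm \<beta> h) =
       (NN \<beta> 2 h - (2 * Pb \<beta> + 2 * Qb \<beta>)) - ((lm \<beta> h - b) * NN \<beta> 1 h + b * (NN \<beta> 1 h - 2))
       - 2 * ((lp \<beta> h - a) - (lm \<beta> h - b))"
      by (simp add: a_def b_def algebra_simps)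
    finally show "((NN \<beta> 2 h - (2 * Pb \<beta> + 2 * Qb \<beta>)) - ((lm \<beta> h - b) * NN \<beta> 1 h + b * (NN \<beta> 1 h - 2))
       - 2 * ((lp \<beta> h - a) - (lm \<beta> h - b))) / (lp \<beta> h - lm \<beta> h) = AA \<beta> h - 2" by simp
  qed
  qed
qed

lemma bo_BB: "bo (BB \<beta>) 2"
proof -
  obtain e where e: "e > 0" "\<And>h. norm h \<le> e \<Longrightarrow> norm (lp \<beta> h - lm \<beta> h) \<ge> exp (-\<beta>)"
    using denom_lower[of \<beta>] by blast
  define a where "a = Pb \<beta> + Qb \<beta>"
  have N10: "bo (\<lambda>h. NN \<beta> 1 h) 0"
    using bo_add[OF bo_mono'[OF bo_N1, of 0] bo_const[of 2]] by simp
  have num: "bo (\<lambda>h. (lp \<beta> h - a) * NN \<beta> 1 h + a * (NN \<beta> 1 h - 2) - (NN \<beta> 2 h - (2 * Pb \<beta> + 2 * Qb \<beta>))) 2"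
    by (rule bo_diff[OF bo_add[OF bo_mult'[OF bo_lp[of \<beta>, folded a_def] N10] bo_mult'[OF bo_const bo_N1]] bo_N2]) auto
  have "bo (\<lambda>h. ((lp \<beta> h - a) * NN \<beta> 1 h + a * (NN \<beta> 1 h - 2) - (NN \<beta> 2 h - (2 * Pb \<beta> + 2 * Qb \<beta>))) / (lp \<beta> h - lm \<beta> h)) 2"
    by (rule bo_div[OF num _ e(1) e(2)]) simp
  then show ?thesis
  proof (rule bo_eq)
    fix h
    have "(lp \<beta> h - a) * NN \<beta> 1 h + a * (NN \<beta> 1 h - 2) - (NN \<beta> 2 h - (2 * Pb \<beta> + 2 * Qb \<beta>))
       = lp \<beta> h * NN \<beta> 1 h - NN \<beta> 2 h" by (simp add: a_def algebra_simps)
    then show "((lp \<beta> h - a) * NN \<beta> 1 h + a * (NN \<beta> 1 h - 2) - (NN \<beta> 2 h - (2 * Pb \<beta> + 2 * Qb \<beta>))) / (lp \<beta> h - lm \<beta> h) = BB \<beta> h"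
      unfolding BB_def by simp
  qed
qed

lemma lp_RR: "lp \<beta> h = (Pb \<beta> + Qb \<beta>) * RR (rb \<beta>) h"
proof -
  have Qr: "Qb \<beta> * rb \<beta> = Pb \<beta>" by (simp flip: of_real_mult add: exp_rel)
  have r1: "rb \<beta> + 1 \<noteq> 0"
  proof
    assume "rb \<beta> + 1 = 0"
    then have "Re (rb \<beta> + 1) = 0" by simp
    then show False using exp_gt_zero[of "2*\<beta>"] by simp
  qed
  have "Pb \<beta> + Qb \<beta> = Qb \<beta> * (rb \<beta> + 1)" using Qr by (simp add: algebra_simps)
  then show ?thesis unfolding lp_def RR_def using r1 Qr[symmetric]
    by (simp add: field_simps)
qed

lemma NN_zero: "NN \<beta> (Suc k) 0 = 2 * (Pb \<beta> + Qb \<beta>)^k"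
proof -
  have ne': "lp \<beta> 0 - lm \<beta> 0 \<noteq> 0" unfolding lp_lm by (simp add: ss0)
  then have ne: "lp \<beta> 0 \<noteq> lm \<beta> 0" by simp
  have A: "AA \<beta> 0 = 2"
  proof -
    have "NN \<beta> 2 0 - lm \<beta> 0 * NN \<beta> 1 0 = 2 * (lp \<beta> 0 - lm \<beta> 0)"
      by (simp add: NN1 NN1' NN2 lp0 lm0 cc0 algebra_simps)
    then show ?thesis by (simp only: AA_def nonzero_mult_div_cancel_right[OF ne'])
  qed
  have B: "BB \<beta> 0 = 0"
  proof -
    have "lp \<beta> 0 * NN \<beta> 1 0 - NN \<beta> 2 0 = 0"
      by (simp add: NN1 NN1' NN2 lp0 cc0 algebra_simps)
    then show ?thesis unfolding BB_def by simp
  qed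
  show ?thesis using closed_form[OF ne, of k] by (simp add: A B lp0)
qed



lemma ul_bound:
  fixes f :: "nat \<Rightarrow> complex \<Rightarrow> complex"
  assumes "eventually (\<lambda>n. \<forall>z\<in>K. norm (f n z - l z) \<le> b n) sequentially" "b \<longlonglongrightarrow> 0"
  shows "uniform_limit K f l sequentially"
proof (rule uniform_limitI)
  fix e :: real assume "e > 0"
  then have "eventually (\<lambda>n. b n < e) sequentially" using order_tendstoD(2)[OF assms(2)] by blast
  with assms(1) show "eventually (\<lambda>n. \<forall>z\<in>K. dist (f n z) (l z) < e) sequentially"
    by eventually_elim (auto simp: dist_norm intro: le_less_trans)
qed

lemma pow_bound:
  fixes d :: complex
  shows "norm ((1 + d)^k - 1) \<le> exp (real k * norm d) - 1"
proof (induction k)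
  case 0 then show ?case by simp
next
  case (Suc k)
  have e1: "1 + norm d \<le> exp (norm d)" by (rule exp_ge_add_one_self)
  have e0: "0 \<le> exp (real k * norm d) - 1" by simp
  have "(1 + d)^Suc k - 1 = (1 + d) * ((1 + d)^k - 1) + d" by (simp add: algebra_simps)
  then have "norm ((1 + d)^Suc k - 1) \<le> norm (1 + d) * norm ((1 + d)^k - 1) + norm d"
    by (metis norm_mult norm_triangle_ineq)
  also have "\<dots> \<le> (1 + norm d) * (exp (real k * norm d) - 1) + norm d"
    by (intro add_mono mult_mono Suc.IH) (auto intro: norm_triangle_le)
  also have "\<dots> \<le> exp (norm d) * (exp (real k * norm d) - 1) + (exp (norm d) - 1)"
    using e1 e0 by (intro add_mono mult_right_mono) linarith+
  also have "\<dots> = exp (real (Suc k) * norm d) - 1"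
    by (simp add: algebra_simps exp_add[symmetric])
  finally show ?case .
qed

lemma exp_close:
  fixes a b :: complex
  shows "norm (exp a - exp b) \<le> exp (norm b) * (norm (a - b) * exp (norm (a - b)))"
proof -
  have "exp a - exp b = exp b * (exp (a - b) - 1)" by (simp add: algebra_simps exp_diff)
  then have "norm (exp a - exp b) = norm (exp b) * norm (exp (a - b) - 1)" by (simp add: norm_mult)
  also have "\<dots> \<le> exp (norm b) * (norm (a - b) * exp (norm (a - b)))"
  proof (rule mult_mono)
    show "norm (exp b) \<le> exp (norm b)" using abs_Re_le_cmod[of b] by simp
    show "norm (exp (a - b) - 1) \<le> norm (a - b) * exp (norm (a - b))"
      using exp_taylor[of "a - b" 1] by simp
  qed auto
  finally show ?thesis .
qed

lemma expect_NN:
  "ising_expect 0 \<beta> n (\<lambda>\<sigma>. exp (z * of_real (magnetization n \<sigma> / t)))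
     = NN \<beta> n (z / of_real t) / NN \<beta> n 0"
proof -
  have 1: "(\<Sum>\<sigma>\<in>spin_configs n. of_real (ising_weight 0 \<beta> n \<sigma>) * exp (z * of_real (magnetization n \<sigma> / t)))
      = NN \<beta> n (z / of_real t)"
    unfolding NN_def by (intro sum.cong refl) (simp add: ising_weight_def W_def magnetization_def)
  have 2: "of_real (ising_Z 0 \<beta> n) = NN \<beta> n 0"
    unfolding NN_def ising_Z_def of_real_sum by (intro sum.cong refl) (simp add: ising_weight_def W_def)
  show ?thesis unfolding ising_expect_def 1 2 ..
qed

lemma sigma_facts:
  assumes "n \<ge> (1::nat)"
  shows "real n powr (1/4) > 0" "(real n powr (1/4))^2 = sqrt (real n)" "sqrt (real n) ^ 2 = real n"
    "real n powr (-1/4) = 1 / real n powr (1/4)"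
proof -
  show "real n powr (1/4) > 0" using assms by simp
  have "(real n powr (1/4))^2 = real n powr (1/4 + 1/4)" by (simp add: power2_eq_square powr_add[symmetric])
  also have "\<dots> = sqrt (real n)" by (simp add: powr_half_sqrt)
  finally show "(real n powr (1/4))^2 = sqrt (real n)" .
  show "sqrt (real n) ^ 2 = real n" by simp
  show "real n powr (-1/4) = 1 / real n powr (1/4)" using powr_minus_divide[of "real n" "1/4"] by simp
qed

lemma sigma_lim: "(\<lambda>n. real n powr (-1/4)) \<longlonglongrightarrow> 0"
  by (rule tendsto_neg_powr) (auto simp: filterlim_real_sequentially)


lemma alg0:
  fixes a b Lk Mk Sk ek Xk G :: complex
  assumes "a \<noteq> 0" "Sk \<noteq> 0" "ek \<noteq> 0" "Xk \<noteq> 0" "Lk = Sk * ek * Xk"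
  shows "(a*Lk + b*Mk)/(2*Sk) * G = a/2 * Xk * (ek * G) * (1 + b/a * (Mk/Lk))"
  using assms by (simp add: field_simps)
lemma alg:
  fixes a b L M S e d G :: complex
  assumes "a \<noteq> 0" "L \<noteq> 0" "S \<noteq> 0" "e \<noteq> 0" "L = S * (e * (1 + d))"
  shows "(a*L^k + b*M^k)/(2*S^k) * G = a/2 * (1+d)^k * (e^k * G) * (1 + b/a * (M/L)^k)"
proof -
  have d: "1 + d \<noteq> 0" using assms by auto
  have "L^k = S^k * e^k * (1+d)^k" unfolding assms(5) by (simp add: power_mult_distrib)
  from alg0[OF assms(1) _ _ _ this, of b "M^k" G] assms d show ?thesis
    by (simp add: power_divide)
qed
lemma alg2:
  fixes z T S r k :: complex
  assumes "T^2 = S" "S \<noteq> 0" "k = S^2 - 1"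
  shows "k * (r*(z/T)^2/2 + c*(z/T)^4) + (- (S * r) * z^2 / 2) - c * z^4 = - (r*z^2/(2*S)) - c*z^4/S^2"
proof -
  have T4: "T^4 = S^2" using assms(1) by (metis power2_eq_square power_mult numeral_Bit0 mult_2_right power_add numeral_One one_add_one)
  have h2: "(z/T)^2 = z^2/S" and h4: "(z/T)^4 = z^4/S^2" using assms(1) T4 by (simp_all add: power_divide)
  have "k * (r*(z^2/S)/2 + c*(z^4/S^2)) + (- (S * r) * z^2 / 2) - c * z^4 = - (r*z^2/(2*S)) - c*z^4/S^2"
    unfolding assms(3) using assms(2) by (simp add: field_simps power2_eq_square)
  then show ?thesis by (simp only: h2 h4)
qed


lemma rb1: "rb \<beta> + 1 \<noteq> 0"
proof
  assume "rb \<beta> + 1 = 0"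
  then have "Re (rb \<beta> + 1) = 0" by simp
  then show False using exp_gt_zero[of "2*\<beta>"] by simp
qed

lemma bo_dd: "bo (\<lambda>h. RR (rb \<beta>) h / exp (EE (rb \<beta>) h) - 1) 6"
proof -
  obtain e where e: "e > 0" "\<And>h. norm h \<le> e \<Longrightarrow> norm (EE (rb \<beta>) h) \<le> 1"
    using bo_small[OF bo_EE, of 1] by auto
  have low: "norm (exp (EE (rb \<beta>) h)) \<ge> exp (-1)" if "norm h \<le> e" for h
  proof -
    have "Re (EE (rb \<beta>) h) \<ge> -1" using e(2)[OF that] abs_Re_le_cmod[of "EE (rb \<beta>) h"] by linarith
    then show ?thesis by simp
  qed
  have "bo (\<lambda>h. (RR (rb \<beta>) h - exp (EE (rb \<beta>) h)) / exp (EE (rb \<beta>) h)) 6"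
    by (rule bo_div[OF bo_RE[OF rb1] _ e(1) low]) auto
  then show ?thesis by (rule bo_eq) (simp add: field_simps)
qed

lemma near0:
  assumes "\<beta> \<ge> 0"
  obtains \<epsilon> CA Cd \<theta> where "\<epsilon> > 0" "CA \<ge> 0" "Cd \<ge> 0" "0 < \<theta>" "\<theta> < 1"
   "\<And>h. norm h \<le> \<epsilon> \<Longrightarrow> lp \<beta> h \<noteq> lm \<beta> h \<and> lp \<beta> h \<noteq> 0 \<and> AA \<beta> h \<noteq> 0 \<and>
       norm (AA \<beta> h - 2) \<le> CA * norm h^2 \<and> norm (AA \<beta> h) \<ge> 1 \<and> norm (BB \<beta> h) \<le> 1 \<and>
       norm (lm \<beta> h) \<le> \<theta> * norm (lp \<beta> h) \<and>
       norm (RR (rb \<beta>) h / exp (EE (rb \<beta>) h) - 1) \<le> Cd * norm h ^ 6"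
proof -
  define P where "P = exp \<beta>"
  define Q where "Q = exp (-\<beta>)"
  have PQ: "Q \<le> P" "0 < Q" using assms by (simp_all add: P_def Q_def)
  obtain CA e1 where e1: "CA \<ge> 0" "e1 > 0" "\<And>h. norm h \<le> e1 \<Longrightarrow> norm (AA \<beta> h - 2) \<le> CA * norm h ^ 2"
    using bo_AA[of \<beta>] unfolding bo_def by blast
  obtain e2 where e2: "e2 > 0" "\<And>h. norm h \<le> e2 \<Longrightarrow> norm (AA \<beta> h - 2) \<le> 1"
    using bo_small[OF bo_AA[of \<beta>], of 1] by auto
  obtain e3 where e3: "e3 > 0" "\<And>h. norm h \<le> e3 \<Longrightarrow> norm (BB \<beta> h) \<le> 1"
    using bo_small[OF bo_BB[of \<beta>], of 1] by auto
  obtain e4 where e4: "e4 > 0" "\<And>h. norm h \<le> e4 \<Longrightarrow> norm (lp \<beta> h - (Pb \<beta> + Qb \<beta>)) \<le> Q/2"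
    using bo_small[OF bo_lp[of \<beta>], of "Q/2"] PQ by auto
  obtain e5 where e5: "e5 > 0" "\<And>h. norm h \<le> e5 \<Longrightarrow> norm (lm \<beta> h - (Pb \<beta> - Qb \<beta>)) \<le> Q/2"
    using bo_small[OF bo_lm[of \<beta>], of "Q/2"] PQ by auto
  obtain e6 where e6: "e6 > 0" "\<And>h. norm h \<le> e6 \<Longrightarrow> norm (ss (rb \<beta>) h) \<ge> 1/2"
    using ss_lower[of "rb \<beta>"] by blast
  obtain Cd e7 where e7: "Cd \<ge> 0" "e7 > 0" "\<And>h. norm h \<le> e7 \<Longrightarrow> norm (RR (rb \<beta>) h / exp (EE (rb \<beta>) h) - 1) \<le> Cd * norm h ^ 6"
    using bo_dd[of \<beta>] unfolding bo_def by blast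
  define \<theta> where "\<theta> = (P - Q/2) / (P + Q/2)"
  have th: "0 < \<theta>" "\<theta> < 1" using PQ by (auto simp: \<theta>_def field_simps)
  define \<epsilon> where "\<epsilon> = min (min (min e1 e2) (min e3 e4)) (min (min e5 e6) e7)"
  have \<epsilon>: "\<epsilon> > 0" using e1 e2 e3 e4 e5 e6 e7 by (simp add: \<epsilon>_def)
  show ?thesis
  proof (rule that[OF \<epsilon> e1(1) e7(1) th])
    fix h :: complex assume h: "norm h \<le> \<epsilon>"
    have a1: "norm (AA \<beta> h - 2) \<le> CA * norm h^2" using e1(3)[of h] h by (simp add: \<epsilon>_def)
    have a2: "norm (AA \<beta> h - 2) \<le> 1" using e2(2)[of h] h by (simp add: \<epsilon>_def)
    have a3: "norm (BB \<beta> h) \<le> 1" using e3(2)[of h] h by (simp add: \<epsilon>_def)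
    have a4: "norm (lp \<beta> h - (Pb \<beta> + Qb \<beta>)) \<le> Q/2" using e4(2)[of h] h by (simp add: \<epsilon>_def)
    have a5: "norm (lm \<beta> h - (Pb \<beta> - Qb \<beta>)) \<le> Q/2" using e5(2)[of h] h by (simp add: \<epsilon>_def)
    have a6: "norm (ss (rb \<beta>) h) \<ge> 1/2" using e6(2)[of h] h by (simp add: \<epsilon>_def)
    have a7: "norm (RR (rb \<beta>) h / exp (EE (rb \<beta>) h) - 1) \<le> Cd * norm h ^ 6" using e7(3)[of h] h by (simp add: \<epsilon>_def)
    have AA1: "norm (AA \<beta> h) \<ge> 1"
      using a2 norm_triangle_ineq2[of 2 "2 - AA \<beta> h"] by (simp add: norm_minus_commute)
    have nPQ: "norm (Pb \<beta> + Qb \<beta>) = P + Q" unfolding P_def Q_def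
      by (metis norm_of_real of_real_add abs_of_pos add_pos_pos exp_gt_zero)
    have nPQ': "norm (Pb \<beta> - Qb \<beta>) = P - Q" unfolding P_def Q_def
      using PQ(1) unfolding P_def Q_def by (metis norm_of_real of_real_diff abs_of_nonneg diff_ge_0_iff_ge)
    have lpb: "norm (lp \<beta> h) \<ge> P + Q/2"
      using a4 norm_triangle_ineq2[of "Pb \<beta> + Qb \<beta>" "Pb \<beta> + Qb \<beta> - lp \<beta> h"] nPQ
      by (simp add: norm_minus_commute)
    have lmb: "norm (lm \<beta> h) \<le> P - Q/2"
      using a5 norm_triangle_ineq[of "Pb \<beta> - Qb \<beta>" "lm \<beta> h - (Pb \<beta> - Qb \<beta>)"] nPQ' by simp
    have "norm (lm \<beta> h) \<le> \<theta> * (P + Q/2)" using lmb PQ by (simp add: \<theta>_def)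
    also have "\<dots> \<le> \<theta> * norm (lp \<beta> h)" using lpb th by (intro mult_left_mono) auto
    finally have lml: "norm (lm \<beta> h) \<le> \<theta> * norm (lp \<beta> h)" .
    have "lp \<beta> h - lm \<beta> h \<noteq> 0" unfolding lp_lm using a6 by auto
    moreover have "lp \<beta> h \<noteq> 0" using lpb PQ by auto
    moreover have "AA \<beta> h \<noteq> 0" using AA1 by auto
    ultimately show "lp \<beta> h \<noteq> lm \<beta> h \<and> lp \<beta> h \<noteq> 0 \<and> AA \<beta> h \<noteq> 0 \<and>
       norm (AA \<beta> h - 2) \<le> CA * norm h^2 \<and> norm (AA \<beta> h) \<ge> 1 \<and> norm (BB \<beta> h) \<le> 1 \<and>
       norm (lm \<beta> h) \<le> \<theta> * norm (lp \<beta> h) \<and>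
       norm (RR (rb \<beta>) h / exp (EE (rb \<beta>) h) - 1) \<le> Cd * norm h ^ 6"
      using a1 AA1 a3 lml a7 by auto
  qed
qed



theorem theorem2p2:
  fixes \<beta> :: real and K :: "complex set"
  assumes "\<beta> \<ge> 0" and "compact K"
  shows "uniform_limit K
     (\<lambda>n z. ising_expect 0 \<beta> n
              (\<lambda>\<sigma>. exp (z * of_real (magnetization n \<sigma> / real n powr (1/4))))
            * exp (- of_real (sqrt (real n) * exp (2 * \<beta>)) * z ^ 2 / 2))
     (\<lambda>z. exp (- of_real ((3 * exp (6 * \<beta>) - exp (2 * \<beta>)) / 24) * z ^ 4))
     sequentially"
proof -
  obtain \<epsilon> CA Cd \<theta> where ep: "\<epsilon> > 0" "CA \<ge> 0" "Cd \<ge> 0" "0 < \<theta>" "\<theta> < 1"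
   and loc: "\<And>h. norm h \<le> \<epsilon> \<Longrightarrow> lp \<beta> h \<noteq> lm \<beta> h \<and> lp \<beta> h \<noteq> 0 \<and> AA \<beta> h \<noteq> 0 \<and>
       norm (AA \<beta> h - 2) \<le> CA * norm h^2 \<and> norm (AA \<beta> h) \<ge> 1 \<and> norm (BB \<beta> h) \<le> 1 \<and>
       norm (lm \<beta> h) \<le> \<theta> * norm (lp \<beta> h) \<and>
       norm (RR (rb \<beta>) h / exp (EE (rb \<beta>) h) - 1) \<le> Cd * norm h ^ 6"
    using near0[OF assms(1)] by blast
  obtain Zm where Zm: "Zm > 0" "\<And>z. z \<in> K \<Longrightarrow> norm z \<le> Zm"
    using compact_imp_bounded[OF assms(2)] unfolding bounded_pos by blast
  define \<sigma> where "\<sigma> n = real n powr (-1/4)" for n :: nat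
  have \<sigma>lim: "\<sigma> \<longlonglongrightarrow> 0" unfolding \<sigma>_def by (rule sigma_lim)
  have \<sigma>0: "\<sigma> n \<ge> 0" for n by (simp add: \<sigma>_def)
  define hh where "hh n z = z / of_real (real n powr (1/4))" for n :: nat and z :: complex
  have ev: "eventually (\<lambda>n. n \<ge> 1 \<and> Zm * \<sigma> n \<le> \<epsilon>) sequentially"
  proof -
    have "((\<lambda>n. Zm * \<sigma> n) \<longlongrightarrow> Zm * 0) sequentially" by (intro tendsto_intros \<sigma>lim)
    then have "eventually (\<lambda>n. Zm * \<sigma> n < \<epsilon>) sequentially" using ep(1) order_tendstoD(2) by fastforce
    moreover have "eventually (\<lambda>n. n \<ge> (1::nat)) sequentially" by (rule eventually_ge_at_top)
    ultimately show ?thesis by eventually_elim auto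
  qed
  then obtain N where N: "\<And>n. n \<ge> N \<Longrightarrow> n \<ge> 1 \<and> Zm * \<sigma> n \<le> \<epsilon>"
    unfolding eventually_sequentially by blast
  have sig: "real n powr (1/4) > 0" "(real n powr (1/4))^2 = sqrt (real n)" "sqrt (real n) ^ 2 = real n"
    "\<sigma> n = 1 / real n powr (1/4)" if "n \<ge> 1" for n
    using sigma_facts[OF that] by (simp_all add: \<sigma>_def)
  have \<sigma>2: "\<sigma> n ^ 2 = 1 / sqrt (real n)" if "n \<ge> 1" for n
    using sig[OF that] by (simp add: power_divide)
  have \<sigma>4: "\<sigma> n ^ 4 = 1 / real n" if "n \<ge> 1" for n
  proof -
    have "\<sigma> n ^ 4 = (\<sigma> n ^ 2)^2" by simp
    then show ?thesis using \<sigma>2[OF that] sig(3)[OF that] by (simp add: power_divide)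
  qed
  have hb: "norm (hh n z) \<le> Zm * \<sigma> n" "norm (hh n z) \<le> \<epsilon>" if "n \<ge> N" "z \<in> K" for n z
  proof -
    have n1: "n \<ge> 1" using N[OF that(1)] by simp
    have "norm (hh n z) = norm z / real n powr (1/4)"
      using sig(1)[OF n1] by (simp add: hh_def norm_divide)
    also have "\<dots> \<le> Zm / real n powr (1/4)" using Zm(2)[OF that(2)] sig(1)[OF n1] by (intro divide_right_mono) auto
    also have "\<dots> = Zm * \<sigma> n" using sig(4)[OF n1] by simp
    finally show "norm (hh n z) \<le> Zm * \<sigma> n" .
    then show "norm (hh n z) \<le> \<epsilon>" using N[OF that(1)] by linarith
  qed

  define r where "r = rb \<beta>"
  define \<kappa> where "\<kappa> = (r - 3*r^3)/24"
  define gg where "gg n z = - of_real (sqrt (real n) * exp (2 * \<beta>)) * z ^ 2 / 2" for n :: nat and z :: complex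
  define \<psi> where "\<psi> z = exp (- of_real ((3 * exp (6 * \<beta>) - exp (2 * \<beta>)) / 24) * z ^ 4)" for z :: complex
  have \<psi>: "\<psi> z = exp (\<kappa> * z^4)" for z
  proof -
    have "exp (6 * \<beta>) = exp (2*\<beta>)^3" by (simp flip: exp_of_nat_mult)
    then have "- of_real ((3 * exp (6 * \<beta>) - exp (2 * \<beta>)) / 24) = \<kappa>"
      by (simp add: \<kappa>_def r_def field_simps)
    then show ?thesis by (simp add: \<psi>_def)
  qed
  define U1 where "U1 n z = AA \<beta> (hh n z) / 2" for n z
  define U2 where "U2 n z = (1 + (RR r (hh n z) / exp (EE r (hh n z)) - 1)) ^ (n - 1)" for n z
  define U3 where "U3 n z = exp (of_nat (n - 1) * EE r (hh n z) + gg n z)" for n z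
  define U4 where "U4 n z = 1 + BB \<beta> (hh n z) / AA \<beta> (hh n z) * (lm \<beta> (hh n z) / lp \<beta> (hh n z)) ^ (n - 1)" for n z

  have fact: "ising_expect 0 \<beta> n (\<lambda>\<sigma>. exp (z * of_real (magnetization n \<sigma> / real n powr (1/4))))
            * exp (- of_real (sqrt (real n) * exp (2 * \<beta>)) * z ^ 2 / 2)
            = U1 n z * U2 n z * U3 n z * U4 n z" if "n \<ge> N" "z \<in> K" for n z
  proof -
    have n1: "n \<ge> 1" using N[OF that(1)] by simp
    then obtain k where k: "n = Suc k" by (cases n) auto
    define h where "h = hh n z"
    have L: "lp \<beta> h \<noteq> lm \<beta> h" "lp \<beta> h \<noteq> 0" "AA \<beta> h \<noteq> 0" using loc[OF hb(2)[OF that]] by (auto simp: h_def)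
    have "ising_expect 0 \<beta> n (\<lambda>\<sigma>. exp (z * of_real (magnetization n \<sigma> / real n powr (1/4))))
       = NN \<beta> (Suc k) h / NN \<beta> (Suc k) 0" unfolding expect_NN k h_def hh_def k ..
    also have "\<dots> = (AA \<beta> h * lp \<beta> h ^ k + BB \<beta> h * lm \<beta> h ^ k) / (2 * (Pb \<beta> + Qb \<beta>) ^ k)"
      unfolding closed_form[OF L(1)] NN_zero ..
    finally have e1: "ising_expect 0 \<beta> n (\<lambda>\<sigma>. exp (z * of_real (magnetization n \<sigma> / real n powr (1/4))))
       = (AA \<beta> h * lp \<beta> h ^ k + BB \<beta> h * lm \<beta> h ^ k) / (2 * (Pb \<beta> + Qb \<beta>) ^ k)" .
    have S0: "Pb \<beta> + Qb \<beta> \<noteq> 0"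
      by (metis add_pos_pos exp_gt_zero of_real_add of_real_eq_0_iff order_less_irrefl)
    have Lid: "lp \<beta> h = (Pb \<beta> + Qb \<beta>) * (exp (EE r h) * (1 + (RR r h / exp (EE r h) - 1)))"
      unfolding lp_RR r_def by simp
    have "ising_expect 0 \<beta> n (\<lambda>\<sigma>. exp (z * of_real (magnetization n \<sigma> / real n powr (1/4))))
            * exp (- of_real (sqrt (real n) * exp (2 * \<beta>)) * z ^ 2 / 2)
       = (AA \<beta> h * lp \<beta> h ^ k + BB \<beta> h * lm \<beta> h ^ k) / (2 * (Pb \<beta> + Qb \<beta>) ^ k) * exp (gg n z)"
      unfolding e1 gg_def ..
    also have "\<dots> = AA \<beta> h / 2 * (1 + (RR r h / exp (EE r h) - 1)) ^ k * (exp (EE r h) ^ k * exp (gg n z))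
         * (1 + BB \<beta> h / AA \<beta> h * (lm \<beta> h / lp \<beta> h) ^ k)"
      by (rule alg[OF L(3) L(2) S0 exp_not_eq_zero Lid])
    also have "exp (EE r h) ^ k * exp (gg n z) = U3 n z"
      unfolding U3_def k h_def by (simp add: exp_add exp_of_nat_mult)
    also have "AA \<beta> h / 2 * (1 + (RR r h / exp (EE r h) - 1)) ^ k * U3 n z
         * (1 + BB \<beta> h / AA \<beta> h * (lm \<beta> h / lp \<beta> h) ^ k) = U1 n z * U2 n z * U3 n z * U4 n z"
      unfolding U1_def U2_def U4_def h_def k by simp
    finally show ?thesis .
  qed

  have L1: "uniform_limit K U1 (\<lambda>_. 1) sequentially"
  proof (rule ul_bound)
    show "eventually (\<lambda>n. \<forall>z\<in>K. norm (U1 n z - 1) \<le> CA * (Zm * \<sigma> n)^2 / 2) sequentially"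
      unfolding eventually_sequentially
    proof (intro exI allI impI ballI)
      fix n z assume n: "N \<le> n" and z: "z \<in> K"
      have "norm (U1 n z - 1) = norm (AA \<beta> (hh n z) - 2) / 2"
        unfolding U1_def by (simp add: field_simps norm_divide)
      also have "\<dots> \<le> CA * norm (hh n z)^2 / 2" using loc[OF hb(2)[OF n z]] by simp
      also have "\<dots> \<le> CA * (Zm * \<sigma> n)^2 / 2"
        using hb(1)[OF n z] ep(2) by (intro divide_right_mono mult_left_mono power_mono) auto
      finally show "norm (U1 n z - 1) \<le> CA * (Zm * \<sigma> n)^2 / 2" .
    qed
    have "(\<lambda>n. CA * (Zm * \<sigma> n)^2 / 2) \<longlonglongrightarrow> CA * (Zm * 0)^2 / 2"
      by (intro tendsto_intros \<sigma>lim) auto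
    then show "(\<lambda>n. CA * (Zm * \<sigma> n)^2 / 2) \<longlonglongrightarrow> 0" by simp
  qed
  have L2: "uniform_limit K U2 (\<lambda>_. 1) sequentially"
  proof (rule ul_bound)
    show "eventually (\<lambda>n. \<forall>z\<in>K. norm (U2 n z - 1) \<le> exp (Cd * Zm^6 * \<sigma> n ^ 2) - 1) sequentially"
      unfolding eventually_sequentially
    proof (intro exI allI impI ballI)
      fix n z assume n: "N \<le> n" and z: "z \<in> K"
      have n1: "n \<ge> 1" using N[OF n] by simp
      define d where "d = RR r (hh n z) / exp (EE r (hh n z)) - 1"
      have dl: "norm d \<le> Cd * norm (hh n z) ^ 6" using loc[OF hb(2)[OF n z]] by (simp add: d_def r_def)
      also have "\<dots> \<le> Cd * (Zm * \<sigma> n) ^ 6"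
        using hb(1)[OF n z] ep(3) by (intro mult_left_mono power_mono) auto
      finally have dl2: "norm d \<le> Cd * (Zm * \<sigma> n) ^ 6" .
      have "norm (U2 n z - 1) \<le> exp (real (n - 1) * norm d) - 1"
        unfolding U2_def d_def[symmetric] by (rule pow_bound)
      also have "real (n - 1) * norm d \<le> real n * (Cd * (Zm * \<sigma> n) ^ 6)"
        using dl2 by (intro mult_mono) auto
      also have "real n * (Cd * (Zm * \<sigma> n) ^ 6) = Cd * Zm^6 * \<sigma> n ^ 2 * (real n * \<sigma> n ^ 4)"
        by (simp add: power_mult_distrib algebra_simps eval_nat_numeral)
      also have "real n * \<sigma> n ^ 4 = 1" using \<sigma>4[OF n1] n1 by simp
      finally show "norm (U2 n z - 1) \<le> exp (Cd * Zm^6 * \<sigma> n ^ 2) - 1" by simp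
    qed
    have "(\<lambda>n. exp (Cd * Zm^6 * \<sigma> n ^ 2) - 1) \<longlonglongrightarrow> exp (Cd * Zm^6 * 0 ^ 2) - 1"
      by (intro tendsto_intros \<sigma>lim)
    then show "(\<lambda>n. exp (Cd * Zm^6 * \<sigma> n ^ 2) - 1) \<longlonglongrightarrow> 0" by simp
  qed
  define \<tau> where "\<tau> n = norm r * Zm^2 / 2 * \<sigma> n ^ 2 + norm \<kappa> * Zm^4 * \<sigma> n ^ 4" for n
  have L3: "uniform_limit K U3 \<psi> sequentially"
  proof (rule ul_bound)
    show "eventually (\<lambda>n. \<forall>z\<in>K. norm (U3 n z - \<psi> z) \<le> exp (norm \<kappa> * Zm^4) * (\<tau> n * exp (\<tau> n))) sequentially"
      unfolding eventually_sequentially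
    proof (intro exI allI impI ballI)
      fix n z assume n: "N \<le> n" and z: "z \<in> K"
      have n1: "n \<ge> 1" using N[OF n] by simp
      define T where "T = (of_real (real n powr (1/4)) :: complex)"
      define S where "S = (of_real (sqrt (real n)) :: complex)"
      have TS: "T^2 = S" unfolding T_def S_def using sig(2)[OF n1] by (metis of_real_power)
      have S0: "S \<noteq> 0" using n1 by (simp add: S_def)
      have kS: "(of_nat (n - 1) :: complex) = S^2 - 1"
      proof -
        have "S^2 = of_real (sqrt (real n) ^ 2)" by (simp only: S_def of_real_power)
        also have "\<dots> = of_nat n" using sig(3)[OF n1] by simp
        finally show ?thesis using n1 by (simp add: of_nat_diff)
      qed
      have gS: "gg n z = - (S * r) * z^2 / 2" by (simp add: gg_def S_def r_def)
      have EEk: "EE r h = r*h^2/2 + \<kappa>*h^4" for h by (simp add: EE_def \<kappa>_def)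
      define a where "a = of_nat (n - 1) * EE r (hh n z) + gg n z"
      have ab: "a - \<kappa> * z^4 = - (r*z^2/(2*S)) - \<kappa>*z^4/S^2"
        unfolding a_def EEk gS hh_def T_def[symmetric] by (rule alg2[OF TS S0 kS])
      have nz: "norm z \<le> Zm" by (rule Zm(2)[OF z])
      have "norm (a - \<kappa> * z^4) \<le> norm (r*z^2/(2*S)) + norm (\<kappa>*z^4/S^2)"
        unfolding ab by (metis norm_minus_cancel norm_triangle_ineq4 diff_conv_add_uminus)
      also have "norm (r*z^2/(2*S)) = norm r * norm z ^ 2 / 2 * \<sigma> n ^ 2"
        using \<sigma>2[OF n1] by (simp add: S_def norm_mult norm_divide norm_power)
      also have "norm (\<kappa>*z^4/S^2) = norm \<kappa> * norm z ^ 4 * \<sigma> n ^ 4"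
      proof -
        have "norm (S^2) = real n" using sig(3)[OF n1] by (simp add: S_def norm_power)
        then show ?thesis using \<sigma>4[OF n1] by (simp add: norm_mult norm_divide norm_power)
      qed
      also have "norm r * norm z ^ 2 / 2 * \<sigma> n ^ 2 + norm \<kappa> * norm z ^ 4 * \<sigma> n ^ 4 \<le> \<tau> n"
        unfolding \<tau>_def using nz
        by (intro add_mono mult_right_mono mult_left_mono divide_right_mono power_mono) auto
      finally have abd: "norm (a - \<kappa> * z^4) \<le> \<tau> n" .
      have "norm (U3 n z - \<psi> z) = norm (exp a - exp (\<kappa> * z^4))" by (simp add: U3_def a_def \<psi>)
      also have "\<dots> \<le> exp (norm (\<kappa> * z^4)) * (norm (a - \<kappa> * z^4) * exp (norm (a - \<kappa> * z^4)))"
        by (rule exp_close)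
      also have "\<dots> \<le> exp (norm \<kappa> * Zm^4) * (\<tau> n * exp (\<tau> n))"
      proof (intro mult_mono)
        show "exp (norm (\<kappa> * z^4)) \<le> exp (norm \<kappa> * Zm^4)"
          using nz by (simp add: norm_mult norm_power mult_left_mono power_mono)
        show "norm (a - \<kappa> * z^4) \<le> \<tau> n" by (rule abd)
        show "exp (norm (a - \<kappa> * z^4)) \<le> exp (\<tau> n)" using abd by simp
        show "0 \<le> \<tau> n" using abd norm_ge_zero order_trans by blast
      qed auto
      finally show "norm (U3 n z - \<psi> z) \<le> exp (norm \<kappa> * Zm^4) * (\<tau> n * exp (\<tau> n))" .
    qed
    have "\<tau> \<longlonglongrightarrow> norm r * Zm^2 / 2 * 0 ^ 2 + norm \<kappa> * Zm^4 * 0 ^ 4"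
      unfolding \<tau>_def by (intro tendsto_intros \<sigma>lim)
    then have "\<tau> \<longlonglongrightarrow> 0" by simp
    then have "(\<lambda>n. exp (norm \<kappa> * Zm^4) * (\<tau> n * exp (\<tau> n))) \<longlonglongrightarrow> exp (norm \<kappa> * Zm^4) * (0 * exp 0)"
      by (intro tendsto_intros)
    then show "(\<lambda>n. exp (norm \<kappa> * Zm^4) * (\<tau> n * exp (\<tau> n))) \<longlonglongrightarrow> 0" by simp
  qed
  have L4: "uniform_limit K U4 (\<lambda>_. 1) sequentially"
  proof (rule ul_bound)
    show "eventually (\<lambda>n. \<forall>z\<in>K. norm (U4 n z - 1) \<le> \<theta> ^ n / \<theta>) sequentially"
      unfolding eventually_sequentially
    proof (intro exI allI impI ballI)
      fix n z assume n: "N \<le> n" and z: "z \<in> K"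
      have n1: "n \<ge> 1" using N[OF n] by simp
      then obtain k where k: "n = Suc k" by (cases n) auto
      define h where "h = hh n z"
      have H: "lp \<beta> h \<noteq> 0" "norm (AA \<beta> h) \<ge> 1" "norm (BB \<beta> h) \<le> 1" "norm (lm \<beta> h) \<le> \<theta> * norm (lp \<beta> h)"
        using loc[OF hb(2)[OF n z]] by (auto simp: h_def)
      have q: "norm (lm \<beta> h / lp \<beta> h) \<le> \<theta>"
        using H(1,4) by (simp add: norm_divide divide_le_eq)
      have "norm (U4 n z - 1) = norm (BB \<beta> h) / norm (AA \<beta> h) * norm (lm \<beta> h / lp \<beta> h) ^ k"
        by (simp add: U4_def h_def k norm_mult norm_divide norm_power)
      also have "\<dots> \<le> 1 * \<theta> ^ k"
      proof (rule mult_mono)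
        show "norm (BB \<beta> h) / norm (AA \<beta> h) \<le> 1" using H(2,3) by (simp add: divide_le_eq)
        show "norm (lm \<beta> h / lp \<beta> h) ^ k \<le> \<theta> ^ k" using q by (intro power_mono) auto
      qed (use ep in auto)
      also have "\<dots> = \<theta> ^ n / \<theta>" using ep(4) by (simp add: k)
      finally show "norm (U4 n z - 1) \<le> \<theta> ^ n / \<theta>" .
    qed
    have "(\<lambda>n. \<theta> ^ n) \<longlonglongrightarrow> 0" using ep by (intro LIMSEQ_power_zero) auto
    then show "(\<lambda>n. \<theta> ^ n / \<theta>) \<longlonglongrightarrow> 0" by (rule tendsto_divide_zero)
  qed
  have b1: "bounded ((\<lambda>_. 1::complex) ` K)" by (rule bounded_subset[of "{1}"]) auto
  have cont: "continuous_on K \<psi>" unfolding \<psi>_def by (intro continuous_intros)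
  have bpsi: "bounded ((\<lambda>z. 1 * 1 * \<psi> z) ` K)"
    using compact_imp_bounded[OF compact_continuous_image[OF cont assms(2)]] by simp
  have b11: "bounded ((\<lambda>z. (1::complex) * 1) ` K)" using b1 by simp
  have b1psi: "bounded (\<psi> ` K)"
    using compact_imp_bounded[OF compact_continuous_image[OF cont assms(2)]] .
  have LA: "uniform_limit K (\<lambda>n z. U1 n z * U2 n z) (\<lambda>z. 1 * 1) sequentially"
    by (rule uniform_lim_mult[OF L1 L2 b1 b1])
  have LB: "uniform_limit K (\<lambda>n z. U1 n z * U2 n z * U3 n z) (\<lambda>z. 1 * 1 * \<psi> z) sequentially"
    by (rule uniform_lim_mult[OF LA L3 b11 b1psi])
  have LC: "uniform_limit K (\<lambda>n z. U1 n z * U2 n z * U3 n z * U4 n z) (\<lambda>z. 1 * 1 * \<psi> z * 1) sequentially"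
    by (rule uniform_lim_mult[OF LB L4 bpsi b1])
  show ?thesis
  proof (rule iffD1[OF uniform_limit_cong LC])
    show "\<forall>\<^sub>F n in sequentially. \<forall>z\<in>K. U1 n z * U2 n z * U3 n z * U4 n z =
       ising_expect 0 \<beta> n (\<lambda>\<sigma>. exp (z * of_real (magnetization n \<sigma> / real n powr (1/4))))
            * exp (- of_real (sqrt (real n) * exp (2 * \<beta>)) * z ^ 2 / 2)"
      unfolding eventually_sequentially using fact by metis
  qed (simp add: \<psi>_def)
qed

end
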